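(* Let $(I_t)_{t\in\mathbb{Z}}$ be a stochastic process such that there exists a family $(I_t^n)_{t\in\mathbb{Z}}$, $n\in\mathbb{N}$, of $\{0,1\}$-valued stationary stochastic processes with $P(I_0^n=1)>0$ for all $n$ and $$\mathcal{L}\bigl((I_t^n)_{t\in\{-u,\dots,v\}}\mid I_0^n=1\bigr)\Longrightarrow \mathcal{L}\bigl((I_t)_{t\in\{-u,\dots,v\}}\bigr)\quad (n\to\infty)$$ for all $u,v\in\mathbb{N}$. Define $S_+^i=\sum_{t=1}^\infty I_t\in\mathbb{N}_0\cup\{\infty\}$ and $S_-^i=\sum_{t=1}^\infty I_{-t}\in\mathbb{N}_0\cup\{\infty\}$. Then $$P(S_+^i\ge k,\ S_-^i\ge \ell)=P(S_+^i\ge k+\ell)=P(S_-^i\ge k+\ell),\qquad k,\ell\in\mathbb{N}_0.$$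
   Context: $\mathbb{N}_0=\{0,1,2,\dots\}$. $\mathcal{L}(\cdot\mid\cdot)$ denotes conditional law and $\Longrightarrow$ convergence in distribution. *)

theory Defs
  imports "HOL-Probability.Probability"
begin

text \<open>Finite-dimensional window (X_t) for t in {-u,...,v}, encoded as a function
  int => real that vanishes outside the window.\<close>
definition fdd_vec :: "(int \<Rightarrow> 'a \<Rightarrow> real) \<Rightarrow> nat \<Rightarrow> nat \<Rightarrow> 'a \<Rightarrow> (int \<Rightarrow> real)" where
  "fdd_vec X u v \<omega> = (\<lambda>t. if - int u \<le> t \<and> t \<le> int v then X t \<omega> else 0)"

definition stationary_process :: "'a measure \<Rightarrow> (int \<Rightarrow> 'a \<Rightarrow> real) \<Rightarrow> bool" where
  "stationary_process M X \<longleftrightarrow>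
     (\<forall>s::int. distr M (Pi\<^sub>M UNIV (\<lambda>_. borel)) (\<lambda>\<omega> t. X (t + s) \<omega>)
             = distr M (Pi\<^sub>M UNIV (\<lambda>_. borel)) (\<lambda>\<omega> t. X t \<omega>))"

text \<open>Weak convergence, for every window {-u..v}, of the conditional law of the
  window of X_n given X_n(0) = 1 to the law of the window of X (tested against all
  bounded continuous functions).\<close>
definition cond_fdd_conv ::
  "(nat \<Rightarrow> 'b measure) \<Rightarrow> (nat \<Rightarrow> int \<Rightarrow> 'b \<Rightarrow> real) \<Rightarrow> 'a measure \<Rightarrow> (int \<Rightarrow> 'a \<Rightarrow> real) \<Rightarrow> bool" where
  "cond_fdd_conv Mn Xn M X \<longleftrightarrow>
     (\<forall>u v. \<forall>f :: (int \<Rightarrow> real) \<Rightarrow> real. continuous_on UNIV f \<and> bounded (range f) \<longrightarrow>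
        (\<lambda>n. (\<integral>\<omega>. indicator {\<omega> \<in> space (Mn n). Xn n 0 \<omega> = 1} \<omega> * f (fdd_vec (Xn n) u v \<omega>) \<partial>Mn n)
              / measure (Mn n) {\<omega> \<in> space (Mn n). Xn n 0 \<omega> = 1})
        \<longlonglongrightarrow> (\<integral>\<omega>. f (fdd_vec X u v \<omega>) \<partial>M))"

definition S_plus :: "(int \<Rightarrow> 'a \<Rightarrow> real) \<Rightarrow> 'a \<Rightarrow> ennreal" where
  "S_plus X \<omega> = (\<Sum>t. ennreal (X (int t + 1) \<omega>))"

definition S_minus :: "(int \<Rightarrow> 'a \<Rightarrow> real) \<Rightarrow> 'a \<Rightarrow> ennreal" where
  "S_minus X \<omega> = (\<Sum>t. ennreal (X (- int t - 1) \<omega>))"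

end

theory Submission
  imports Defs
begin


definition b01 :: "real \<Rightarrow> nat" where "b01 r = (if r = 1 then 1 else 0)"
definition cnt :: "(int \<Rightarrow> real) \<Rightarrow> int \<Rightarrow> int \<Rightarrow> nat" where
  "cnt x a b = (\<Sum>t\<in>{a..b}. b01 (x t))"

lemma b01_le: "b01 r \<le> 1" by (simp add: b01_def)

lemma cnt_empty: "b < a \<Longrightarrow> cnt x a b = 0"
  by (simp add: cnt_def)

lemma cnt_split: assumes "a \<le> b + 1" "b \<le> d" shows "cnt x a d = cnt x a b + cnt x (b+1) d"
proof -
  have "{a..d} = {a..b} \<union> {b+1..d}" using assms by auto
  then show ?thesis unfolding cnt_def by (simp add: sum.union_disjoint)
qed

lemma cnt_right: "a \<le> b \<Longrightarrow> cnt x a b = cnt x a (b-1) + b01 (x b)"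
  using cnt_split[of a "b-1" b x] by (simp add: cnt_def)

lemma cnt_left: "a \<le> b \<Longrightarrow> cnt x a b = b01 (x a) + cnt x (a+1) b"
  using cnt_split[of a a b x] by (simp add: cnt_def)

lemma cnt_mono: "a' \<le> a \<Longrightarrow> b \<le> b' \<Longrightarrow> cnt x a b \<le> cnt x a' b'"
  unfolding cnt_def by (rule sum_mono2) auto

lemma cnt_shift: "cnt (\<lambda>t. x (t + s)) a b = cnt x (a + s) (b + s)"
proof -
  have "(\<Sum>t\<in>{a..b}. b01 (x (t + s))) = (\<Sum>t\<in>(\<lambda>t. t + s) ` {a..b}. b01 (x t))"
    by (subst sum.reindex) (auto simp: inj_on_def)
  also have "(\<lambda>t. t + s) ` {a..b} = {a+s..b+s}"
    by (simp add: algebra_simps)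
  finally show ?thesis by (simp add: cnt_def)
qed

lemma cnt_real: assumes "\<And>t. x t \<in> {0,1}"
  shows "(\<Sum>t\<in>{a..b}. x t) = real (cnt x a b)"
  unfolding cnt_def of_nat_sum
  by (rule sum.cong) (use assms in \<open>auto simp: b01_def\<close>)

lemma hit_left:
  "1 \<le> l \<Longrightarrow> l \<le> cnt x (- int m) (-1) \<Longrightarrow> \<exists>j\<in>{1..int m}. x (-j) = 1 \<and> cnt x (-j) (-1) = l"
proof (induction m)
  case 0 then show ?case by (simp add: cnt_empty)
next
  case (Suc m)
  show ?case
  proof (cases "l \<le> cnt x (- int m) (-1)")
    case True then show ?thesis using Suc by force
  next
    case False
    have e: "cnt x (- int (Suc m)) (-1) = b01 (x (- int (Suc m))) + cnt x (- int m) (-1)"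
      using cnt_left[of "- int (Suc m)" "-1" x] by simp
    with False Suc.prems b01_le[of "x (- int (Suc m))"] have "b01 (x (- int (Suc m))) = 1"
      "cnt x (- int (Suc m)) (-1) = l" by linarith+
    then show ?thesis by (intro bexI[of _ "int (Suc m)"]) (auto simp: b01_def split: if_splits)
  qed
qed

lemma hit_right:
  "1 \<le> l \<Longrightarrow> l \<le> cnt x 1 (int m) \<Longrightarrow> \<exists>j\<in>{1..int m}. x j = 1 \<and> cnt x 1 j = l"
proof (induction m)
  case 0 then show ?case by (simp add: cnt_empty)
next
  case (Suc m)
  show ?case
  proof (cases "l \<le> cnt x 1 (int m)")
    case True then show ?thesis using Suc by force
  next
    case False
    have e: "cnt x 1 (int (Suc m)) = cnt x 1 (int m) + b01 (x (int (Suc m)))"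
      using cnt_right[of 1 "int (Suc m)" x] by simp
    with False Suc.prems b01_le[of "x (int (Suc m))"] have "b01 (x (int (Suc m))) = 1"
      "cnt x 1 (int (Suc m)) = l" by linarith+
    then show ?thesis by (intro bexI[of _ "int (Suc m)"]) (auto simp: b01_def split: if_splits)
  qed
qed



abbreviation "PS \<equiv> Pi\<^sub>M (UNIV::int set) (\<lambda>_. (borel :: real measure))"

lemma space_PS: "space PS = UNIV" by (simp add: space_PiM)

lemma proc_meas:
  assumes "\<And>t. X t \<in> borel_measurable N"
  shows "(\<lambda>\<omega> t. X (t + s) \<omega>) \<in> measurable N PS"
  by (rule measurable_PiM_single'[where f="\<lambda>t \<omega>. X (t + s) \<omega>", simplified]) (use assms in auto)

lemma stat_shift:
  assumes st: "stationary_process N X" and X: "\<And>t. X t \<in> borel_measurable N"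
    and P: "Measurable.pred PS \<Phi>"
  shows "measure N {\<omega>\<in>space N. \<Phi> (\<lambda>t. X (t + s) \<omega>)} = measure N {\<omega>\<in>space N. \<Phi> (\<lambda>t. X t \<omega>)}"
proof -
  have B: "{x\<in>space PS. \<Phi> x} \<in> sets PS" using P by measurable
  have g1: "(\<lambda>\<omega> t. X (t + s) \<omega>) \<in> measurable N PS" using proc_meas[OF X] .
  have g0: "(\<lambda>\<omega> t. X t \<omega>) \<in> measurable N PS" using proc_meas[OF X, where s=0] by simp
  have "measure (distr N PS (\<lambda>\<omega> t. X (t + s) \<omega>)) {x\<in>space PS. \<Phi> x}
      = measure (distr N PS (\<lambda>\<omega> t. X t \<omega>)) {x\<in>space PS. \<Phi> x}"
    using st unfolding stationary_process_def by metis
  then show ?thesis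
    using measure_distr[OF g1 B] measure_distr[OF g0 B]
    by (simp add: space_PS vimage_def Int_def conj_commute)
qed

lemma pred_comp:
  assumes X: "\<And>t. X t \<in> borel_measurable N" and P: "Measurable.pred PS \<Phi>"
  shows "{\<omega>\<in>space N. \<Phi> (\<lambda>t. X (t + s) \<omega>)} \<in> sets N"
proof -
  have "Measurable.pred N (\<lambda>\<omega>. \<Phi> (\<lambda>t. X (t + s) \<omega>))"
    using measurable_compose[OF proc_meas[OF X] P] by (simp add: o_def)
  then show ?thesis by measurable
qed

lemma transport:
  assumes N: "prob_space N" and st: "stationary_process N X" and X: "\<And>t. X t \<in> borel_measurable N"
    and J: "finite J"
    and PF: "\<And>j. j \<in> J \<Longrightarrow> Measurable.pred PS (F j)"
    and PE: "Measurable.pred PS E" and PG: "Measurable.pred PS G"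
    and cover: "\<And>\<omega>. \<omega> \<in> space N \<Longrightarrow> E (\<lambda>t. X t \<omega>) \<Longrightarrow> \<exists>j\<in>J. F j (\<lambda>t. X (t + s j) \<omega>)"
    and disj: "\<And>\<omega> i j. \<omega> \<in> space N \<Longrightarrow> i \<in> J \<Longrightarrow> j \<in> J \<Longrightarrow> i \<noteq> j \<Longrightarrow>
        F i (\<lambda>t. X t \<omega>) \<Longrightarrow> F j (\<lambda>t. X t \<omega>) \<Longrightarrow> False"
    and sub: "\<And>\<omega> j. \<omega> \<in> space N \<Longrightarrow> j \<in> J \<Longrightarrow> F j (\<lambda>t. X t \<omega>) \<Longrightarrow> G (\<lambda>t. X t \<omega>)"
  shows "measure N {\<omega>\<in>space N. E (\<lambda>t. X t \<omega>)} \<le> measure N {\<omega>\<in>space N. G (\<lambda>t. X t \<omega>)}"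
proof -
  interpret prob_space N by (rule N)
  have X0: "\<And>\<Phi>. Measurable.pred PS \<Phi> \<Longrightarrow> {\<omega>\<in>space N. \<Phi> (\<lambda>t. X t \<omega>)} \<in> sets N"
    using pred_comp[OF X, where s=0] by simp
  let ?A = "\<lambda>j. {\<omega>\<in>space N. F j (\<lambda>t. X (t + s j) \<omega>)}"
  let ?B = "\<lambda>j. {\<omega>\<in>space N. F j (\<lambda>t. X t \<omega>)}"
  have "measure N {\<omega>\<in>space N. E (\<lambda>t. X t \<omega>)} \<le> measure N (\<Union>j\<in>J. ?A j)"
    using cover J PF by (intro finite_measure_mono) (auto intro!: pred_comp[OF X])
  also have "\<dots> \<le> (\<Sum>j\<in>J. measure N (?A j))"
    using J PF by (intro measure_subadditive_finite) (auto intro!: pred_comp[OF X])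
  also have "\<dots> = (\<Sum>j\<in>J. measure N (?B j))"
    using PF by (intro sum.cong refl stat_shift[OF st X]) auto
  also have "\<dots> = measure N (\<Union>j\<in>J. ?B j)"
    using J PF disj by (intro measure_finite_Union[symmetric]) (auto intro!: X0 simp: disjoint_family_on_def)
  also have "\<dots> \<le> measure N {\<omega>\<in>space N. G (\<lambda>t. X t \<omega>)}"
    using sub PG by (intro finite_measure_mono) (auto intro!: X0)
  finally show ?thesis .
qed



definition EVr :: "nat \<Rightarrow> nat \<Rightarrow> nat \<Rightarrow> (int \<Rightarrow> real) \<Rightarrow> bool" where
  "EVr k l m x \<longleftrightarrow> x 0 = 1 \<and> real k \<le> (\<Sum>t\<in>{1..int m}. x t) \<and> real l \<le> (\<Sum>t\<in>{- int m..-1}. x t)"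

definition cntr :: "(int \<Rightarrow> real) \<Rightarrow> int \<Rightarrow> int \<Rightarrow> real" where
  "cntr y a b = (\<Sum>t\<in>{a..b}. if y t = 1 then 1 else 0)"

lemma cntr_cnt: "cntr y a b = real (cnt y a b)"
  unfolding cntr_def cnt_def of_nat_sum by (rule sum.cong) (auto simp: b01_def)

lemma EVr_cnt: "(\<And>t. x t \<in> {0,1}) \<Longrightarrow>
   EVr k l m x \<longleftrightarrow> x 0 = 1 \<and> k \<le> cnt x 1 (int m) \<and> l \<le> cnt x (- int m) (-1)"
  unfolding EVr_def by (simp add: cnt_real)

lemma pred_EVr: "Measurable.pred PS (EVr k l m)"
  unfolding EVr_def by measurable

lemma pred_cntr_eq: "Measurable.pred PS (\<lambda>y. cntr y a b = c)"
  unfolding cntr_def by measurable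

lemma pred_cntr_le: "Measurable.pred PS (\<lambda>y. c \<le> cntr y a b)"
  unfolding cntr_def by measurable

definition F1 :: "nat \<Rightarrow> nat \<Rightarrow> nat \<Rightarrow> int \<Rightarrow> (int \<Rightarrow> real) \<Rightarrow> bool" where
  "F1 k l m j y \<longleftrightarrow> y 0 = 1 \<and> y j = 1 \<and> cntr y 0 (j-1) = real l \<and> real k \<le> cntr y (j+1) (j + int m)"

definition F2 :: "nat \<Rightarrow> nat \<Rightarrow> nat \<Rightarrow> int \<Rightarrow> (int \<Rightarrow> real) \<Rightarrow> bool" where
  "F2 k l m j y \<longleftrightarrow> y (-j) = 1 \<and> y 0 = 1 \<and> cntr y (1-j) 0 = real l \<and> real (k+l) \<le> cntr y (1-j) (int m - j)"

lemma pred_F1: "Measurable.pred PS (F1 k l m j)"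
  unfolding F1_def cntr_def by measurable

lemma pred_F2: "Measurable.pred PS (F2 k l m j)"
  unfolding F2_def cntr_def by measurable

lemma F1_cover:
  assumes "1 \<le> l" "x 0 = 1" "k \<le> cnt x 1 (int m)" "l \<le> cnt x (- int m) (-1)"
  shows "\<exists>j\<in>{1..int m}. F1 k l m j (\<lambda>t. x (t + - j))"
proof -
  obtain j where j: "j \<in> {1..int m}" "x (-j) = 1" "cnt x (-j) (-1) = l"
    using hit_left[OF assms(1,4)] by blast
  have "F1 k l m j (\<lambda>t. x (t + - j))"
    unfolding F1_def cntr_cnt cnt_shift using j assms by simp
  with j show ?thesis by blast
qed

lemma F1_disj:
  assumes "i \<in> {1..int m}" "j \<in> {1..int m}" "i < j" "F1 k l m i y" "F1 k l m j y"
  shows False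
proof -
  have "cnt y 0 i \<le> cnt y 0 (j-1)" using assms by (intro cnt_mono) auto
  moreover have "cnt y 0 i = cnt y 0 (i-1) + b01 (y i)" using assms by (intro cnt_right) auto
  ultimately show False using assms unfolding F1_def cntr_cnt by (simp add: b01_def)
qed

lemma F1_sub:
  assumes "j \<in> {1..int m}" "F1 k l m j y"
  shows "y 0 = 1 \<and> k + l \<le> cnt y 1 (int (2*m))"
proof -
  have a: "cnt y 0 (j-1) = b01 (y 0) + cnt y 1 (j-1)" using assms cnt_left[of 0 "j-1" y] by simp
  have b: "cnt y 1 j = cnt y 1 (j-1) + b01 (y j)" using assms by (intro cnt_right) auto
  have c: "cnt y 1 (j + int m) = cnt y 1 j + cnt y (j+1) (j + int m)" using assms by (intro cnt_split) auto
  have d: "cnt y 1 (j + int m) \<le> cnt y 1 (int (2*m))" using assms by (intro cnt_mono) auto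
  show ?thesis using a b c d assms unfolding F1_def cntr_cnt by (simp add: b01_def)
qed

lemma F2_cover:
  assumes "1 \<le> l" "x 0 = 1" "k + l \<le> cnt x 1 (int m)"
  shows "\<exists>j\<in>{1..int m}. F2 k l m j (\<lambda>t. x (t + j))"
proof -
  obtain j where j: "j \<in> {1..int m}" "x j = 1" "cnt x 1 j = l"
    using hit_right[OF assms(1), of x m] assms(3) by auto
  have "F2 k l m j (\<lambda>t. x (t + j))"
    unfolding F2_def cntr_cnt cnt_shift using j assms by simp
  with j show ?thesis by blast
qed

lemma F2_disj:
  assumes "i \<in> {1..int m}" "j \<in> {1..int m}" "i < j" "F2 k l m i y" "F2 k l m j y"
  shows False
proof -
  have "cnt y (-i) 0 \<le> cnt y (1-j) 0" using assms by (intro cnt_mono) auto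
  moreover have "cnt y (-i) 0 = b01 (y (-i)) + cnt y (-i+1) 0" using assms by (intro cnt_left) auto
  ultimately show False using assms unfolding F2_def cntr_cnt by (simp add: b01_def)
qed

lemma F2_sub:
  assumes "j \<in> {1..int m}" "F2 k l m j y"
  shows "y 0 = 1 \<and> k \<le> cnt y 1 (int m) \<and> l \<le> cnt y (- int m) (-1)"
proof -
  have a: "cnt y (1-j) 0 = cnt y (1-j) (-1) + b01 (y 0)" using assms cnt_right[of "1-j" 0 y] by simp
  have b: "cnt y (-j) (-1) = b01 (y (-j)) + cnt y (1-j) (-1)" using assms cnt_left[of "-j" "-1" y] by simp
  have c: "cnt y (-j) (-1) \<le> cnt y (- int m) (-1)" using assms by (intro cnt_mono) auto
  have e: "cnt y (1-j) (int m - j) = cnt y (1-j) 0 + cnt y 1 (int m - j)" using assms cnt_split[of "1-j" 0 "int m - j" y] by simp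
  have f: "cnt y 1 (int m - j) \<le> cnt y 1 (int m)" using assms by (intro cnt_mono) auto
  show ?thesis using a b c e f assms unfolding F2_def cntr_cnt by (simp add: b01_def)
qed



lemma ineq1:
  assumes N: "prob_space N" and st: "stationary_process N X" and X: "\<And>t. X t \<in> borel_measurable N"
    and b: "\<And>t \<omega>. \<omega> \<in> space N \<Longrightarrow> X t \<omega> \<in> {0,1}"
  shows "measure N {\<omega>\<in>space N. EVr k l m (\<lambda>t. X t \<omega>)} \<le> measure N {\<omega>\<in>space N. EVr (k+l) 0 (2*m) (\<lambda>t. X t \<omega>)}"
proof (cases "l = 0")
  case True
  interpret prob_space N by (rule N)
  show ?thesis
  proof (rule finite_measure_mono)
    show "{\<omega>\<in>space N. EVr (k+l) 0 (2*m) (\<lambda>t. X t \<omega>)} \<in> sets N"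
      using pred_comp[OF X pred_EVr, where s=0] by simp
    show "{\<omega>\<in>space N. EVr k l m (\<lambda>t. X t \<omega>)} \<subseteq> {\<omega>\<in>space N. EVr (k+l) 0 (2*m) (\<lambda>t. X t \<omega>)}"
    proof safe
      fix \<omega> assume w: "\<omega> \<in> space N" "EVr k l m (\<lambda>t. X t \<omega>)"
      have b': "\<And>t. X t \<omega> \<in> {0,1}" using w(1) by (rule b)
      have "cnt (\<lambda>t. X t \<omega>) 1 (int m) \<le> cnt (\<lambda>t. X t \<omega>) 1 (int (2*m))" by (intro cnt_mono) auto
      then show "EVr (k+l) 0 (2*m) (\<lambda>t. X t \<omega>)"
        using w(2) True unfolding EVr_cnt[OF b'] by simp
    qed
  qed
next
  case False
  show ?thesis
  proof (rule transport[OF N st X, where J="{1..int m}" and F="F1 k l m" and s="\<lambda>j. - j"])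
    show "Measurable.pred PS (F1 k l m j)" for j by (rule pred_F1)
    show "Measurable.pred PS (EVr k l m)" "Measurable.pred PS (EVr (k+l) 0 (2*m))" by (rule pred_EVr)+
    fix \<omega> assume w: "\<omega> \<in> space N"
    then have b': "\<And>t. X t \<omega> \<in> {0,1}" by (rule b)
    { assume "EVr k l m (\<lambda>t. X t \<omega>)"
      then show "\<exists>j\<in>{1..int m}. F1 k l m j (\<lambda>t. X (t + - j) \<omega>)"
        using F1_cover[of l "\<lambda>t. X t \<omega>" k m] False by (simp add: EVr_cnt[OF b']) }
    { fix i j assume "i \<in> {1..int m}" "j \<in> {1..int m}" "i \<noteq> j" "F1 k l m i (\<lambda>t. X t \<omega>)" "F1 k l m j (\<lambda>t. X t \<omega>)"
      then show False using F1_disj[of i m j k l "\<lambda>t. X t \<omega>"] F1_disj[of j m i k l "\<lambda>t. X t \<omega>"]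
        by (cases "i < j") auto }
    { fix j assume "j \<in> {1..int m}" "F1 k l m j (\<lambda>t. X t \<omega>)"
      then show "EVr (k+l) 0 (2*m) (\<lambda>t. X t \<omega>)"
        using F1_sub[of j m k l "\<lambda>t. X t \<omega>"] by (simp add: EVr_cnt[OF b']) }
  qed simp
qed

lemma ineq2:
  assumes N: "prob_space N" and st: "stationary_process N X" and X: "\<And>t. X t \<in> borel_measurable N"
    and b: "\<And>t \<omega>. \<omega> \<in> space N \<Longrightarrow> X t \<omega> \<in> {0,1}"
  shows "measure N {\<omega>\<in>space N. EVr (k+l) 0 m (\<lambda>t. X t \<omega>)} \<le> measure N {\<omega>\<in>space N. EVr k l m (\<lambda>t. X t \<omega>)}"
proof (cases "l = 0")
  case True
  then show ?thesis by simp
next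
  case False
  show ?thesis
  proof (rule transport[OF N st X, where J="{1..int m}" and F="F2 k l m" and s="\<lambda>j. j"])
    show "Measurable.pred PS (F2 k l m j)" for j by (rule pred_F2)
    show "Measurable.pred PS (EVr k l m)" "Measurable.pred PS (EVr (k+l) 0 m)" by (rule pred_EVr)+
    fix \<omega> assume w: "\<omega> \<in> space N"
    then have b': "\<And>t. X t \<omega> \<in> {0,1}" by (rule b)
    { assume "EVr (k+l) 0 m (\<lambda>t. X t \<omega>)"
      then show "\<exists>j\<in>{1..int m}. F2 k l m j (\<lambda>t. X (t + j) \<omega>)"
        using F2_cover[of l "\<lambda>t. X t \<omega>" k m] False by (simp add: EVr_cnt[OF b']) }
    { fix i j assume "i \<in> {1..int m}" "j \<in> {1..int m}" "i \<noteq> j" "F2 k l m i (\<lambda>t. X t \<omega>)" "F2 k l m j (\<lambda>t. X t \<omega>)"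
      then show False using F2_disj[of i m j k l "\<lambda>t. X t \<omega>"] F2_disj[of j m i k l "\<lambda>t. X t \<omega>"]
        by (cases "i < j") auto }
    { fix j assume "j \<in> {1..int m}" "F2 k l m j (\<lambda>t. X t \<omega>)"
      then show "EVr k l m (\<lambda>t. X t \<omega>)"
        using F2_sub[of j m k l "\<lambda>t. X t \<omega>"] by (simp add: EVr_cnt[OF b']) }
  qed simp
qed



lemma fdd_in: "- int u \<le> t \<Longrightarrow> t \<le> int v \<Longrightarrow> fdd_vec X u v \<omega> t = X t \<omega>"
  by (simp add: fdd_vec_def)

lemma cont_coord: "continuous_on UNIV (\<lambda>x::int\<Rightarrow>real. x t)" by simp

lemma stepA:
  assumes M: "prob_space M" and I: "\<And>t. I t \<in> borel_measurable M"
    and Mn: "\<And>n. prob_space (Mn n)"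
    and In01: "\<And>n t \<omega>. \<omega> \<in> space (Mn n) \<Longrightarrow> In n t \<omega> \<in> {0, 1}"
    and cv: "cond_fdd_conv Mn In M I"
  shows "AE \<omega> in M. I t \<omega> \<in> {0,1}"
proof -
  interpret prob_space M by (rule M)
  define f where "f = (\<lambda>x::int\<Rightarrow>real. min 1 \<bar>x t * (1 - x t)\<bar>)"
  define m where "m = nat \<bar>t\<bar>"
  have win: "- int m \<le> t" "t \<le> int m" unfolding m_def by auto
  have fc: "continuous_on UNIV f" unfolding f_def
    by (intro continuous_intros cont_coord)
  have fb: "bounded (range f)" unfolding f_def bounded_iff
    by (intro exI[of _ 1]) auto
  have "(\<lambda>n. (\<integral>\<omega>. indicator {\<omega> \<in> space (Mn n). In n 0 \<omega> = 1} \<omega> * f (fdd_vec (In n) m m \<omega>) \<partial>Mn n)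
              / measure (Mn n) {\<omega> \<in> space (Mn n). In n 0 \<omega> = 1})
        \<longlonglongrightarrow> (\<integral>\<omega>. f (fdd_vec I m m \<omega>) \<partial>M)"
    using cv fc fb unfolding cond_fdd_conv_def by blast
  moreover have "(\<integral>\<omega>. indicator {\<omega> \<in> space (Mn n). In n 0 \<omega> = 1} \<omega> * f (fdd_vec (In n) m m \<omega>) \<partial>Mn n) = 0" for n
  proof -
    have "(\<integral>\<omega>. indicator {\<omega> \<in> space (Mn n). In n 0 \<omega> = 1} \<omega> * f (fdd_vec (In n) m m \<omega>) \<partial>Mn n) = (\<integral>\<omega>. 0 \<partial>Mn n)"
    proof (rule Bochner_Integration.integral_cong[OF refl])
      fix \<omega> assume "\<omega> \<in> space (Mn n)"
      then have "In n t \<omega> \<in> {0,1}" by (rule In01)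
      then show "indicator {\<omega> \<in> space (Mn n). In n 0 \<omega> = 1} \<omega> * f (fdd_vec (In n) m m \<omega>) = 0"
        unfolding f_def fdd_in[OF win] by auto
    qed
    then show ?thesis by simp
  qed
  ultimately have "(\<lambda>n. 0) \<longlonglongrightarrow> (\<integral>\<omega>. f (fdd_vec I m m \<omega>) \<partial>M)" by simp
  then have i0: "(\<integral>\<omega>. f (fdd_vec I m m \<omega>) \<partial>M) = 0" using LIMSEQ_unique tendsto_const by blast
  have feq: "f (fdd_vec I m m \<omega>) = min 1 \<bar>I t \<omega> * (1 - I t \<omega>)\<bar>" for \<omega>
    unfolding f_def fdd_in[OF win] ..
  have meas: "(\<lambda>\<omega>. min 1 \<bar>I t \<omega> * (1 - I t \<omega>)\<bar>) \<in> borel_measurable M" using I by measurable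
  have int: "integrable M (\<lambda>\<omega>. min 1 \<bar>I t \<omega> * (1 - I t \<omega>)\<bar>)"
    by (rule integrable_const_bound[where B=1]) (use meas in auto)
  have "AE \<omega> in M. min 1 \<bar>I t \<omega> * (1 - I t \<omega>)\<bar> = 0"
    using i0 unfolding feq by (subst (asm) integral_nonneg_eq_0_iff_AE[OF int]) auto
  then show ?thesis by eventually_elim (auto simp: min_def split: if_splits)
qed

definition hh :: "nat \<Rightarrow> real \<Rightarrow> real" where "hh k c = max 0 (min 1 (c - real k + 1))"

lemma hh_nat: "hh k (real c) = (if k \<le> c then 1 else 0)"
  unfolding hh_def by auto

definition FF :: "nat \<Rightarrow> nat \<Rightarrow> nat \<Rightarrow> (int \<Rightarrow> real) \<Rightarrow> real" where
  "FF k l m x = hh k (\<Sum>t\<in>{1..int m}. x t) * hh l (\<Sum>t\<in>{- int m..-1}. x t)"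

definition EVL :: "nat \<Rightarrow> nat \<Rightarrow> nat \<Rightarrow> (int \<Rightarrow> real) \<Rightarrow> bool" where
  "EVL k l m x \<longleftrightarrow> real k \<le> (\<Sum>t\<in>{1..int m}. x t) \<and> real l \<le> (\<Sum>t\<in>{- int m..-1}. x t)"

lemma FF_cont: "continuous_on UNIV (FF k l m)"
  unfolding FF_def hh_def by (intro continuous_intros cont_coord)

lemma FF_bounded: "bounded (range (FF k l m))"
proof -
  have "\<bar>hh k c\<bar> \<le> 1" for k c unfolding hh_def by auto
  then have "\<bar>FF k l m x\<bar> \<le> 1" for x unfolding FF_def abs_mult
    by (metis mult_le_one abs_ge_zero)
  then show ?thesis unfolding bounded_iff by auto
qed

lemma FF_fdd: "FF k l m (fdd_vec X m m \<omega>) = FF k l m (\<lambda>t. X t \<omega>)"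
  unfolding FF_def by (intro arg_cong2[where f="(*)"] arg_cong[where f="hh _"] sum.cong) (auto simp: fdd_vec_def)

lemma FF_01: "(\<And>t. x t \<in> {0,1}) \<Longrightarrow> FF k l m x = (if EVL k l m x then 1 else 0)"
  unfolding FF_def EVL_def by (simp add: cnt_real hh_nat)

lemma stepB:
  assumes M: "prob_space M" and I: "\<And>t. I t \<in> borel_measurable M"
    and Mn: "\<And>n. prob_space (Mn n)"
    and In: "\<And>n t. In n t \<in> borel_measurable (Mn n)"
    and In01: "\<And>n t \<omega>. \<omega> \<in> space (Mn n) \<Longrightarrow> In n t \<omega> \<in> {0, 1}"
    and cv: "cond_fdd_conv Mn In M I"
    and G: "AE \<omega> in M. \<forall>t. I t \<omega> \<in> {0,1}"
  shows "(\<lambda>n. measure (Mn n) {\<omega>\<in>space (Mn n). EVr k l m (\<lambda>t. In n t \<omega>)} / measure (Mn n) {\<omega> \<in> space (Mn n). In n 0 \<omega> = 1})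
     \<longlonglongrightarrow> measure M {\<omega>\<in>space M. EVL k l m (\<lambda>t. I t \<omega>)}"
proof -
  interpret prob_space M by (rule M)
  have lim: "(\<lambda>n. (\<integral>\<omega>. indicator {\<omega> \<in> space (Mn n). In n 0 \<omega> = 1} \<omega> * FF k l m (fdd_vec (In n) m m \<omega>) \<partial>Mn n)
              / measure (Mn n) {\<omega> \<in> space (Mn n). In n 0 \<omega> = 1})
        \<longlonglongrightarrow> (\<integral>\<omega>. FF k l m (fdd_vec I m m \<omega>) \<partial>M)"
    using cv FF_cont FF_bounded unfolding cond_fdd_conv_def by blast
  have L: "(\<integral>\<omega>. indicator {\<omega> \<in> space (Mn n). In n 0 \<omega> = 1} \<omega> * FF k l m (fdd_vec (In n) m m \<omega>) \<partial>Mn n)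
     = measure (Mn n) {\<omega>\<in>space (Mn n). EVr k l m (\<lambda>t. In n t \<omega>)}" for n
  proof -
    have "(\<integral>\<omega>. indicator {\<omega> \<in> space (Mn n). In n 0 \<omega> = 1} \<omega> * FF k l m (fdd_vec (In n) m m \<omega>) \<partial>Mn n)
       = (\<integral>\<omega>. indicator {\<omega>\<in>space (Mn n). EVr k l m (\<lambda>t. In n t \<omega>)} \<omega> \<partial>Mn n)"
    proof (rule Bochner_Integration.integral_cong[OF refl])
      fix \<omega> assume w: "\<omega> \<in> space (Mn n)"
      then have b: "\<And>t. In n t \<omega> \<in> {0,1}" by (rule In01)
      show "indicator {\<omega> \<in> space (Mn n). In n 0 \<omega> = 1} \<omega> * FF k l m (fdd_vec (In n) m m \<omega>)
         = indicator {\<omega>\<in>space (Mn n). EVr k l m (\<lambda>t. In n t \<omega>)} \<omega>"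
        unfolding FF_fdd FF_01[OF b] using w by (auto simp: EVr_def EVL_def indicator_def)
    qed
    also have "\<dots> = measure (Mn n) {\<omega>\<in>space (Mn n). EVr k l m (\<lambda>t. In n t \<omega>)}"
      by (simp add: Int_absorb2 subset_eq)
    finally show ?thesis .
  qed
  have R: "(\<integral>\<omega>. FF k l m (fdd_vec I m m \<omega>) \<partial>M) = measure M {\<omega>\<in>space M. EVL k l m (\<lambda>t. I t \<omega>)}"
  proof -
    have "(\<integral>\<omega>. FF k l m (fdd_vec I m m \<omega>) \<partial>M) = (\<integral>\<omega>. FF k l m (\<lambda>t. I t \<omega>) \<partial>M)"
      unfolding FF_fdd ..
    also have "\<dots> = (\<integral>\<omega>. indicator {\<omega>\<in>space M. EVL k l m (\<lambda>t. I t \<omega>)} \<omega> \<partial>M)"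
    proof (rule integral_cong_AE)
      show "(\<lambda>\<omega>. FF k l m (\<lambda>t. I t \<omega>)) \<in> borel_measurable M"
        unfolding FF_def hh_def using I by measurable
      show "indicator {\<omega>\<in>space M. EVL k l m (\<lambda>t. I t \<omega>)} \<in> borel_measurable M"
        unfolding EVL_def using I by measurable
      show "AE \<omega> in M. FF k l m (\<lambda>t. I t \<omega>) = indicator {\<omega>\<in>space M. EVL k l m (\<lambda>t. I t \<omega>)} \<omega>"
        using G AE_space by eventually_elim (auto simp: FF_01 indicator_def)
    qed
    also have "\<dots> = measure M {\<omega>\<in>space M. EVL k l m (\<lambda>t. I t \<omega>)}"
      by (simp add: Int_absorb2 subset_eq)
    finally show ?thesis .
  qed
  show ?thesis using lim unfolding L R .
qed



lemma reidx_pos: "(\<Sum>t<m. g (int t + 1)) = (\<Sum>t\<in>{1..int m}. (g t :: 'b::comm_monoid_add))"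
proof (induction m)
  case (Suc m)
  have "{1..int (Suc m)} = insert (int m + 1) {1..int m}" by auto
  then show ?case using Suc by (simp add: add.commute)
qed simp

lemma reidx_neg: "(\<Sum>t<m. g (- int t - 1)) = (\<Sum>t\<in>{- int m..-1}. (g t :: 'b::comm_monoid_add))"
proof (induction m)
  case (Suc m)
  have "{- int (Suc m)..-1} = insert (- int m - 1) {- int m..-1}" by auto
  then show ?case using Suc by (simp add: add.commute)
qed simp

lemma ennreal_SUP_nat: "(of_nat k :: ennreal) \<le> (SUP m. of_nat (c m :: nat)) \<longleftrightarrow> (\<exists>m. k \<le> c m)"
proof
  assume "\<exists>m. k \<le> c m"
  then obtain m where "k \<le> c m" by blast
  then have "(of_nat k :: ennreal) \<le> of_nat (c m)" by simp
  also have "\<dots> \<le> (SUP m. of_nat (c m))" by (rule SUP_upper) simp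
  finally show "(of_nat k :: ennreal) \<le> (SUP m. of_nat (c m))" .
next
  assume a: "(of_nat k :: ennreal) \<le> (SUP m. of_nat (c m))"
  show "\<exists>m. k \<le> c m"
  proof (rule ccontr)
    assume "\<not> ?thesis"
    then have lt: "\<And>m. c m < k" by (meson not_le)
    have "\<And>m. c m \<le> k - 1" using lt by (metis Suc_pred' gr_implies_not0 less_Suc_eq_le neq0_conv)
    then have "(SUP m. of_nat (c m)) \<le> (of_nat (k - 1) :: ennreal)" by (intro SUP_least) simp
    with a have "(of_nat k :: ennreal) \<le> of_nat (k - 1)" by (rule order_trans)
    then have "k \<le> k - 1" by simp
    with \<open>\<not> ?thesis\<close> show False by (cases k) auto
  qed
qed

lemma ser_iff:
  assumes x: "\<And>t. x t \<in> {0,1}"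
  shows "(of_nat k \<le> (\<Sum>t. ennreal (x (f t)))) \<longleftrightarrow> (\<exists>m. real k \<le> (\<Sum>t<m. x (f t)))"
proof -
  have nn: "\<And>t. 0 \<le> x t" using x by (metis insert_iff order_refl singletonD zero_le_one)
  have "(\<Sum>t. ennreal (x (f t))) = (SUP m. \<Sum>t<m. ennreal (x (f t)))" by (rule suminf_eq_SUP)
  also have "\<dots> = (SUP m. of_nat (\<Sum>t<m. b01 (x (f t))))"
  proof (rule SUP_cong[OF refl])
    fix m
    have "(\<Sum>t<m. ennreal (x (f t))) = ennreal (\<Sum>t<m. x (f t))" using nn by simp
    also have "(\<Sum>t<m. x (f t)) = real (\<Sum>t<m. b01 (x (f t)))"
      unfolding of_nat_sum by (rule sum.cong) (use x in \<open>auto simp: b01_def\<close>)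
    finally show "(\<Sum>t<m. ennreal (x (f t))) = of_nat (\<Sum>t<m. b01 (x (f t)))"
      by (simp add: ennreal_of_nat_eq_real_of_nat)
  qed
  finally have e: "(\<Sum>t. ennreal (x (f t))) = (SUP m. of_nat (\<Sum>t<m. b01 (x (f t))))" .
  have e2: "(\<Sum>t<m. x (f t)) = real (\<Sum>t<m. b01 (x (f t)))" for m
    unfolding of_nat_sum by (rule sum.cong) (use x in \<open>auto simp: b01_def\<close>)
  show ?thesis unfolding e ennreal_SUP_nat e2 by (simp only: of_nat_le_iff)
qed

lemma Splus_iff: "(\<And>t. I t \<omega> \<in> {0,1}) \<Longrightarrow>
   of_nat k \<le> S_plus I \<omega> \<longleftrightarrow> (\<exists>m. real k \<le> (\<Sum>t\<in>{1..int m}. I t \<omega>))"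
  unfolding S_plus_def using ser_iff[of "\<lambda>t. I t \<omega>" k "\<lambda>t. int t + 1"]
  by (simp add: reidx_pos[where g="\<lambda>t. I t \<omega>"])

lemma Sminus_iff: "(\<And>t. I t \<omega> \<in> {0,1}) \<Longrightarrow>
   of_nat k \<le> S_minus I \<omega> \<longleftrightarrow> (\<exists>m. real k \<le> (\<Sum>t\<in>{- int m..-1}. I t \<omega>))"
  unfolding S_minus_def using ser_iff[of "\<lambda>t. I t \<omega>" k "\<lambda>t. - int t - 1"]
  by (simp add: reidx_neg[where g="\<lambda>t. I t \<omega>"])

lemma psum_mono: "(\<And>t. x t \<in> {0,1}) \<Longrightarrow> A \<subseteq> B \<Longrightarrow> finite B \<Longrightarrow> (\<Sum>t\<in>A. x t) \<le> (\<Sum>t\<in>B. (x t::real))"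
  by (rule sum_mono2) (auto, metis insert_iff order_refl singletonD zero_le_one)

lemma stepC:
  assumes M: "prob_space M" and I: "\<And>t. I t \<in> borel_measurable M"
    and G: "AE \<omega> in M. \<forall>t. I t \<omega> \<in> {0,1}"
  shows "(\<lambda>m. measure M {\<omega>\<in>space M. EVL k l m (\<lambda>t. I t \<omega>)})
     \<longlonglongrightarrow> measure M {\<omega> \<in> space M. of_nat k \<le> S_plus I \<omega> \<and> of_nat l \<le> S_minus I \<omega>}"
proof -
  interpret prob_space M by (rule M)
  define GG where "GG = {\<omega>\<in>space M. \<forall>t. I t \<omega> \<in> {0,1}}"
  have GGs: "GG \<in> sets M" unfolding GG_def using I by measurable
  define A where "A m = {\<omega>\<in>space M. EVL k l m (\<lambda>t. I t \<omega>)} \<inter> GG" for m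
  define SS where "SS = {\<omega> \<in> space M. of_nat k \<le> S_plus I \<omega> \<and> of_nat l \<le> S_minus I \<omega>}"
  have Es: "{\<omega>\<in>space M. EVL k l m (\<lambda>t. I t \<omega>)} \<in> sets M" for m
    unfolding EVL_def using I by measurable
  have As: "A m \<in> sets M" for m unfolding A_def using Es GGs by blast
  have SSs: "SS \<in> sets M" unfolding SS_def S_plus_def S_minus_def using I by measurable
  have mA: "measure M (A m) = measure M {\<omega>\<in>space M. EVL k l m (\<lambda>t. I t \<omega>)}" for m
    by (rule measure_eq_AE) (use G Es As in \<open>auto simp: A_def GG_def\<close>)
  have mS: "measure M (SS \<inter> GG) = measure M SS"
    by (rule measure_eq_AE) (use G SSs GGs in \<open>auto simp: GG_def\<close>)
  have inc: "incseq A"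
  proof (rule incseq_SucI, rule subsetI)
    fix m \<omega> assume w: "\<omega> \<in> A m"
    then have b: "\<And>t. I t \<omega> \<in> {0,1}" by (auto simp: A_def GG_def)
    have "(\<Sum>t\<in>{1..int m}. I t \<omega>) \<le> (\<Sum>t\<in>{1..int (Suc m)}. I t \<omega>)"
      "(\<Sum>t\<in>{- int m..-1}. I t \<omega>) \<le> (\<Sum>t\<in>{- int (Suc m)..-1}. I t \<omega>)"
      by (intro psum_mono[OF b]; auto)+
    then show "\<omega> \<in> A (Suc m)" using w unfolding A_def EVL_def by auto
  qed
  have U: "(\<Union>m. A m) = SS \<inter> GG"
  proof (intro equalityI subsetI)
    fix \<omega> assume "\<omega> \<in> (\<Union>m. A m)"
    then obtain m where w: "\<omega> \<in> A m" by blast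
    then have b: "\<And>t. I t \<omega> \<in> {0,1}" by (auto simp: A_def GG_def)
    have "of_nat k \<le> S_plus I \<omega>" "of_nat l \<le> S_minus I \<omega>"
      using w Splus_iff[where I=I and \<omega>=\<omega>, OF b] Sminus_iff[where I=I and \<omega>=\<omega>, OF b]
      by (auto simp: A_def EVL_def)
    then show "\<omega> \<in> SS \<inter> GG" using w unfolding A_def SS_def by auto
  next
    fix \<omega> assume w: "\<omega> \<in> SS \<inter> GG"
    then have b: "\<And>t. I t \<omega> \<in> {0,1}" by (auto simp: GG_def)
    obtain m1 m2 where m: "real k \<le> (\<Sum>t\<in>{1..int m1}. I t \<omega>)" "real l \<le> (\<Sum>t\<in>{- int m2..-1}. I t \<omega>)"
      using w Splus_iff[where I=I and \<omega>=\<omega>, OF b] Sminus_iff[where I=I and \<omega>=\<omega>, OF b]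
      unfolding SS_def by auto
    have "(\<Sum>t\<in>{1..int m1}. I t \<omega>) \<le> (\<Sum>t\<in>{1..int (max m1 m2)}. I t \<omega>)"
      "(\<Sum>t\<in>{- int m2..-1}. I t \<omega>) \<le> (\<Sum>t\<in>{- int (max m1 m2)..-1}. I t \<omega>)"
      by (intro psum_mono[OF b]; auto)+
    then have "\<omega> \<in> A (max m1 m2)" using w m unfolding A_def EVL_def SS_def by auto
    then show "\<omega> \<in> (\<Union>m. A m)" by blast
  qed
  have "(\<lambda>m. measure M (A m)) \<longlonglongrightarrow> measure M (\<Union>m. A m)"
    using As inc by (intro finite_Lim_measure_incseq) auto
  then show ?thesis unfolding mA U mS by (simp add: SS_def)
qed



theorem proposition3p1:
  fixes M :: "'a measure" and I :: "int \<Rightarrow> 'a \<Rightarrow> real"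
    and Mn :: "nat \<Rightarrow> 'b measure" and In :: "nat \<Rightarrow> int \<Rightarrow> 'b \<Rightarrow> real"
  assumes "prob_space M"
    and "\<And>t. I t \<in> borel_measurable M"
    and "\<And>n. prob_space (Mn n)"
    and "\<And>n t. In n t \<in> borel_measurable (Mn n)"
    and "\<And>n t \<omega>. \<omega> \<in> space (Mn n) \<Longrightarrow> In n t \<omega> \<in> {0, 1}"
    and "\<And>n. stationary_process (Mn n) (In n)"
    and "\<And>n. measure (Mn n) {\<omega> \<in> space (Mn n). In n 0 \<omega> = 1} > 0"
    and "cond_fdd_conv Mn In M I"
  shows "\<forall>k l :: nat.
     measure M {\<omega> \<in> space M. of_nat k \<le> S_plus I \<omega> \<and> of_nat l \<le> S_minus I \<omega>}
       = measure M {\<omega> \<in> space M. of_nat (k + l) \<le> S_plus I \<omega>}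
   \<and> measure M {\<omega> \<in> space M. of_nat (k + l) \<le> S_plus I \<omega>}
       = measure M {\<omega> \<in> space M. of_nat (k + l) \<le> S_minus I \<omega>}"
proof -
  note M = assms(1) and I = assms(2) and Mn = assms(3) and In = assms(4) and In01 = assms(5)
    and st = assms(6) and pos = assms(7) and cv = assms(8)
  have G: "AE \<omega> in M. \<forall>t. I t \<omega> \<in> {0,1}"
    unfolding AE_all_countable using stepA[OF M I Mn In01 cv] by blast
  define PL where "PL k l m = measure M {\<omega>\<in>space M. EVL k l m (\<lambda>t. I t \<omega>)}" for k l m
  define SS where "SS k l = measure M {\<omega> \<in> space M. of_nat k \<le> S_plus I \<omega> \<and> of_nat l \<le> S_minus I \<omega>}" for k l
  define Q where "Q n k l m = measure (Mn n) {\<omega>\<in>space (Mn n). EVr k l m (\<lambda>t. In n t \<omega>)} / measure (Mn n) {\<omega> \<in> space (Mn n). In n 0 \<omega> = 1}" for n k l m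
  have lim: "(\<lambda>n. Q n k l m) \<longlonglongrightarrow> PL k l m" for k l m
    unfolding Q_def PL_def by (rule stepB[OF M I Mn In In01 cv G])
  have conv: "(\<lambda>m. PL k l m) \<longlonglongrightarrow> SS k l" for k l
    unfolding PL_def SS_def by (rule stepC[OF M I G])
  have le1: "PL k l m \<le> PL (k+l) 0 (2*m)" for k l m
    using lim lim
  proof (rule LIMSEQ_le, intro exI allI impI)
    fix n
    show "Q n k l m \<le> Q n (k+l) 0 (2*m)" unfolding Q_def
      using ineq1[OF Mn st In In01] pos[of n] by (intro divide_right_mono) auto
  qed
  have le2: "PL (k+l) 0 m \<le> PL k l m" for k l m
    using lim lim
  proof (rule LIMSEQ_le, intro exI allI impI)
    fix n
    show "Q n (k+l) 0 m \<le> Q n k l m" unfolding Q_def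
      using ineq2[OF Mn st In In01] pos[of n] by (intro divide_right_mono) auto
  qed
  have eq: "SS k l = SS (k+l) 0" for k l
  proof (rule antisym)
    have sm: "strict_mono (\<lambda>m::nat. 2*m)" by (simp add: strict_mono_def)
    have "(\<lambda>m. PL (k+l) 0 (2*m)) \<longlonglongrightarrow> SS (k+l) 0"
      using LIMSEQ_subseq_LIMSEQ[OF conv sm] by (simp add: o_def)
    then show "SS k l \<le> SS (k+l) 0"
      using conv[of k l] le1 by (intro LIMSEQ_le[OF conv[of k l]]) auto
    show "SS (k+l) 0 \<le> SS k l"
      using le2 by (intro LIMSEQ_le[OF conv[of "k+l" 0] conv[of k l]]) auto
  qed
  have e1: "SS n 0 = measure M {\<omega> \<in> space M. of_nat n \<le> S_plus I \<omega>}" for n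
    unfolding SS_def by simp
  have e2: "SS 0 n = measure M {\<omega> \<in> space M. of_nat n \<le> S_minus I \<omega>}" for n
    unfolding SS_def by simp
  show ?thesis
  proof (intro allI conjI)
    fix k l :: nat
    show "measure M {\<omega> \<in> space M. of_nat k \<le> S_plus I \<omega> \<and> of_nat l \<le> S_minus I \<omega>}
       = measure M {\<omega> \<in> space M. of_nat (k + l) \<le> S_plus I \<omega>}"
      using eq[of k l] e1[of "k+l"] unfolding SS_def by simp
    show "measure M {\<omega> \<in> space M. of_nat (k + l) \<le> S_plus I \<omega>}
       = measure M {\<omega> \<in> space M. of_nat (k + l) \<le> S_minus I \<omega>}"
      using eq[of 0 "k+l"] e1[of "k+l"] e2[of "k+l"] by simp
  qed
qed

end
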